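(* Every DSC semigroup is simple, i.e. has no ideal other than itself.
   Context: For a semigroup $S$, a diagonal subsemigroup of $S\times S$ is a subsemigroup of $S\times S$ containing $\Delta=\{(s,s)\colon s\in S\}$. A congruence on $S$ is a diagonal subsemigroup of $S\times S$ that is symmetric and transitive (as a relation on $S$). A semigroup $S$ is DSC if every diagonal subsemigroup of $S\times S$ is a congruence on $S$. An ideal of $S$ is a nonempty $I\subseteq S$ with $sx,xs\in I$ for all $x\in I$, $s\in S$. *)

theory Defs
  imports Main
begin

text \<open>Semigroups are modelled by the type class semigroup_mult; the semigroup is the whole type.
  S x S carries the componentwise multiplication.\<close>

definition subsemigroup_prod :: "('a::semigroup_mult \<times> 'a) set \<Rightarrow> bool" where
  "subsemigroup_prod R \<longleftrightarrow> (\<forall>a b c d. (a, b) \<in> R \<longrightarrow> (c, d) \<in> R \<longrightarrow> (a * c, b * d) \<in> R)"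

definition diagonal_subsemigroup :: "('a::semigroup_mult \<times> 'a) set \<Rightarrow> bool" where
  "diagonal_subsemigroup R \<longleftrightarrow> subsemigroup_prod R \<and> Id \<subseteq> R"

definition semigroup_congruence :: "('a::semigroup_mult \<times> 'a) set \<Rightarrow> bool" where
  "semigroup_congruence R \<longleftrightarrow> diagonal_subsemigroup R \<and> sym R \<and> trans R"

definition DSC :: "'a::semigroup_mult itself \<Rightarrow> bool" where
  "DSC (_ :: 'a itself) \<longleftrightarrow>
     (\<forall>R :: ('a \<times> 'a) set. diagonal_subsemigroup R \<longrightarrow> semigroup_congruence R)"

definition semigroup_ideal :: "'a::semigroup_mult set \<Rightarrow> bool" where
  "semigroup_ideal I \<longleftrightarrow> I \<noteq> {} \<and> (\<forall>x\<in>I. \<forall>s. s * x \<in> I \<and> x * s \<in> I)"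

end

theory Submission
  imports Defs
begin

theorem mainTheorem2:
  assumes "DSC TYPE('a::semigroup_mult)"
    and "semigroup_ideal (I :: 'a set)"
  shows "I = UNIV"
proof -
  let ?R = "Id \<union> (I \<times> (UNIV::'a set))"
  from assms(2) obtain x where x: "x \<in> I" and cl: "\<forall>x\<in>I. \<forall>s. s * x \<in> I \<and> x * s \<in> I"
    unfolding semigroup_ideal_def by blast
  have "diagonal_subsemigroup ?R"
    unfolding diagonal_subsemigroup_def subsemigroup_prod_def using cl by auto
  with assms(1) have "sym ?R" unfolding DSC_def semigroup_congruence_def by blast
  show ?thesis
  proof (intro set_eqI iffI)
    fix s :: 'a
    have "(x, s) \<in> ?R" using x by auto
    with \<open>sym ?R\<close> have "(s, x) \<in> ?R" by (meson symD)
    thus "s \<in> I" using x by auto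
  qed auto
qed

end
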